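(* Let $D=\{G=0\}$ with $G=F_2^2-c'Z^4$. Then: \begin{enumerate} \item If $C_2$ is smooth at a point $P\in C_2\cap L_\infty$, then $(D,P)$ is of type $a_{4\iota-1}$, where $\iota=I(C_2,L_\infty;P)$. \item If $C_2$ is singular at a point $P\in C_2\cap L_\infty$, then $D$ consists of four lines. \item If $P$ is an outer singularity of $D$, i.e. $P\in\operatorname{Sing}(D)\setminus C_2$, then $(D,P)$ is of type $a_1$. \end{enumerate}
   Context: Work in $\mathbb{P}^2$ with homogeneous coordinates $[X:Y:Z]$, $L_\infty=\{Z=0\}$. Let $F_2=F_2^{(2)}(X,Y)+F_2^{(1)}(X,Y)Z+a_{00}Z^2$ be a homogeneous quadratic form, where $F_2^{(i)}$ is a form of degree $i$ in $X,Y$, let $C_2=\{F_2=0\}$, assumed not to contain $L_\infty$, and let $c'\ne0$ be a constant. (This $D$ arises from an invisible factorization $F_2^4-F_4^2=Z^4G$ of a $(2,4)$ torus curve, with $F_4=F_2^2-cZ^4$.) $I(\cdot,\cdot;P)$ is the local intersection multiplicity; for $n\ge1$, type $a_n$ means topologically equivalent to the germ $x^2+y^{n+1}=0$. *)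

theory Defs
  imports "HOL-Analysis.Analysis" "HOL-Computational_Algebra.Polynomial"
begin

text \<open>Homogeneous coordinates of P^2 over the complex numbers: nonzero triples (X,Y,Z).
  L_infinity = {Z = 0}.\<close>

type_synonym pt = "complex \<times> complex \<times> complex"

definition F2 :: "complex \<Rightarrow> complex \<Rightarrow> complex \<Rightarrow> complex \<Rightarrow> complex \<Rightarrow> complex \<Rightarrow> pt \<Rightarrow> complex" where
  "F2 a20 a11 a02 a10 a01 a00 = (\<lambda>(x, y, z).
      a20 * x^2 + a11 * x * y + a02 * y^2 + (a10 * x + a01 * y) * z + a00 * z^2)"

definition on_curve :: "(pt \<Rightarrow> complex) \<Rightarrow> pt \<Rightarrow> bool" where
  "on_curve f p \<longleftrightarrow> p \<noteq> 0 \<and> f p = 0"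

definition sing_pt :: "(pt \<Rightarrow> complex) \<Rightarrow> pt \<Rightarrow> bool" where
  "sing_pt f p \<longleftrightarrow> on_curve f p \<and> (f has_derivative (\<lambda>_. 0)) (at p)"

definition smooth_pt :: "(pt \<Rightarrow> complex) \<Rightarrow> pt \<Rightarrow> bool" where
  "smooth_pt f p \<longleftrightarrow> on_curve f p \<and> \<not> sing_pt f p"

definition on_Linf :: "pt \<Rightarrow> bool" where
  "on_Linf p \<longleftrightarrow> p \<noteq> 0 \<and> snd (snd p) = 0"

definition chart :: "pt \<Rightarrow> complex \<times> complex \<Rightarrow> pt" where
  "chart p = (case p of (x, y, z) \<Rightarrow>
     if z \<noteq> 0 then (\<lambda>(u, v). (u, v, 1))
     else if y \<noteq> 0 then (\<lambda>(u, v). (u, 1, v))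
     else (\<lambda>(u, v). (1, u, v)))"

definition chart_pt :: "pt \<Rightarrow> complex \<times> complex" where
  "chart_pt p = (case p of (x, y, z) \<Rightarrow>
     if z \<noteq> 0 then (x / z, y / z)
     else if y \<noteq> 0 then (x / y, z / y)
     else (y / x, z / x))"

definition germ_type_a :: "(pt \<Rightarrow> complex) \<Rightarrow> pt \<Rightarrow> nat \<Rightarrow> bool" where
  "germ_type_a f p n \<longleftrightarrow>
     (\<exists>U V (h :: complex \<times> complex \<Rightarrow> complex \<times> complex) k. open U \<and> open V \<and> chart_pt p \<in> U \<and> homeomorphism U V h k \<and>
        h (chart_pt p) = 0 \<and>
        h ` {w \<in> U. f (chart p w) = 0} = {(x, y). (x, y) \<in> V \<and> x^2 + y^(n+1) = 0})"

text \<open>Local intersection multiplicity I(C_2, L_infinity; P) for P = [p1:p2:0]: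
  the order of vanishing at t = 0 of the restriction t \<mapsto> F_2(P + t Q) of F_2 to the line
  L_infinity, where Q = [q1:q2:0] is a second point of L_infinity
  (Q = [0:1:0] if p1 /= 0, else [1:0:0]).  Only the Z-free part F_2^(2) matters on Z = 0.\<close>
definition I_Linf :: "complex \<Rightarrow> complex \<Rightarrow> complex \<Rightarrow> pt \<Rightarrow> nat" where
  "I_Linf a20 a11 a02 p = (case p of (p1, p2, _) \<Rightarrow>
     (let (q1, q2) = (if p1 \<noteq> 0 then (0, 1) else (1, 0)) in
       order 0 [: a20 * p1^2 + a11 * p1 * p2 + a02 * p2^2,
                  2 * a20 * p1 * q1 + a11 * (p1 * q2 + p2 * q1) + 2 * a02 * p2 * q2,
                  a20 * q1^2 + a11 * q1 * q2 + a02 * q2^2 :]))"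

definition lin_form :: "pt \<Rightarrow> pt \<Rightarrow> complex" where
  "lin_form l = (\<lambda>(x, y, z). fst l * x + fst (snd l) * y + snd (snd l) * z)"

definition four_lines :: "(pt \<Rightarrow> complex) \<Rightarrow> bool" where
  "four_lines f \<longleftrightarrow> (\<exists>l :: nat \<Rightarrow> pt. (\<forall>i<4. l i \<noteq> 0) \<and>
      (\<forall>w. f w = (\<Prod>i<4. lin_form (l i) w)))"

definition scal :: "complex \<Rightarrow> pt \<Rightarrow> pt" where
  "scal c = (\<lambda>(x, y, z). (c * x, c * y, c * z))"

definition proj_class :: "pt \<Rightarrow> pt set" where
  "proj_class p = {scal c p | c. c \<noteq> 0}"

text \<open>The curve {f = 0} has only finitely many singular points of P^2 (i.e. it is reduced).\<close>
definition finite_sing :: "(pt \<Rightarrow> complex) \<Rightarrow> bool" where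
  "finite_sing f \<longleftrightarrow> finite (proj_class ` {p. sing_pt f p})"

end

theory Submission
  imports Defs
begin

lemma ordx: "order (0::complex) ([:0,1:]^n) = n"
  using order_power_n_n[of "0::complex" n] by simp
lemma ord1: "(c1::complex) \<noteq> 0 \<Longrightarrow> order 0 [:0, c1, c2:] = (1::nat)"
proof -
  assume h: "c1 \<noteq> (0::complex)"
  have e: "[:0, c1, c2:] = [:0,1:]^1 * [:c1, c2:]" by simp
  have "order 0 [:c1,c2:] = 0" using h by (intro order_0I) simp
  then show ?thesis using h unfolding e by (subst order_mult) (auto simp only: ordx, simp)
qed
lemma ord2: "(c2::complex) \<noteq> 0 \<Longrightarrow> order 0 [:0, 0, c2:] = (2::nat)"
proof -
  assume h: "c2 \<noteq> (0::complex)"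
  have e: "[:0, 0, c2:] = [:0,1:]^2 * [:c2:]" by (simp add: power2_eq_square)
  have "order 0 [:c2:] = 0" using h by (intro order_0I) simp
  then show ?thesis using h unfolding e by (subst order_mult) (auto simp only: ordx, simp)
qed



definition germA :: "(complex \<times> complex \<Rightarrow> complex) \<Rightarrow> complex \<times> complex \<Rightarrow> nat \<Rightarrow> bool" where
  "germA g w0 n \<longleftrightarrow> (\<exists>U V (h :: complex \<times> complex \<Rightarrow> complex \<times> complex) k. open U \<and> open V \<and> w0 \<in> U \<and>
     homeomorphism U V h k \<and> h w0 = 0 \<and>
     h ` {w \<in> U. g w = 0} = {(x, y). (x, y) \<in> V \<and> x^2 + y^(n+1) = 0})"

lemma cont_snd_comp:
  assumes "continuous_on (ball v0 d) f" "\<forall>w\<in>S. snd w \<in> ball v0 d"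
  shows "continuous_on S (\<lambda>w. f (snd w))"
  by (rule continuous_on_compose2[OF assms(1) continuous_on_snd]) (use assms(2) in auto)

lemma model_iff:
  assumes "m \<ge> 1"
  shows "(x::complex)^2 + y^(2*m-1+1) = 0 \<longleftrightarrow> x = \<i> * y^m \<or> x = - \<i> * y^m"
proof -
  have "y^(2*m-1+1) = (y^m)^2" using assms by (simp add: power_mult[symmetric] mult.commute)
  then have "x^2 + y^(2*m-1+1) = (x - \<i> * y^m) * (x + \<i> * y^m)"
    by (simp add: algebra_simps power2_eq_square)
  then show ?thesis by (simp add: eq_neg_iff_add_eq_0)
qed

lemma twograph:
  fixes g :: "complex \<times> complex \<Rightarrow> complex" and \<phi>1 \<phi>2 \<psi> :: "complex \<Rightarrow> complex"
  assumes d: "0 < d" and c1: "continuous_on (ball v0 d) \<phi>1" and c2: "continuous_on (ball v0 d) \<phi>2"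
    and c3: "continuous_on (ball v0 d) \<psi>"
    and nz: "\<forall>v\<in>ball v0 d. \<psi> v \<noteq> 0"
    and df: "\<forall>v\<in>ball v0 d. \<phi>1 v - \<phi>2 v = (v - v0)^m * \<psi> v"
    and p0: "\<phi>1 v0 = u0" and m: "m \<ge> 1"
    and W: "open W" "(u0, v0) \<in> W"
    and Wz: "\<forall>u v. (u, v) \<in> W \<longrightarrow> v \<in> ball v0 d \<and> (g (u, v) = 0 \<longleftrightarrow> u = \<phi>1 v \<or> u = \<phi>2 v)"
  shows "germA g (u0, v0) (2*m-1)"
proof -
  define S :: "(complex \<times> complex) set" where "S = UNIV \<times> ball v0 d"
  define T :: "(complex \<times> complex) set" where "T = UNIV \<times> ball 0 d"
  define h where "h = (\<lambda>w. (\<i> * (2 * fst w - \<phi>1 (snd w) - \<phi>2 (snd w)) / \<psi> (snd w), snd w - v0))"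
  define k where "k = (\<lambda>w. ((fst w * \<psi> (snd w + v0) / \<i> + \<phi>1 (snd w + v0) + \<phi>2 (snd w + v0)) / 2, snd w + v0))"
  have sS: "\<forall>w\<in>S. snd w \<in> ball v0 d" by (auto simp: S_def)
  have sT: "\<forall>w\<in>T. snd w + v0 \<in> ball v0 d" by (auto simp: T_def dist_norm)
  have hc: "continuous_on S h" unfolding h_def
    apply (intro continuous_intros cont_snd_comp[OF c1 sS] cont_snd_comp[OF c2 sS] cont_snd_comp[OF c3 sS])
    using nz sS by auto
  have sT': "\<forall>w\<in>(\<lambda>w. (fst w, snd w + v0)) ` T. snd w \<in> ball v0 d" using sT by auto
  have comp: "continuous_on T (\<lambda>w. f (snd w + v0))" if "continuous_on (ball v0 d) f" for f :: "complex \<Rightarrow> complex"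
    by (rule continuous_on_compose2[OF that]) (intro continuous_intros, use sT in auto)
  have kc: "continuous_on T k" unfolding k_def
    by (intro continuous_intros comp c1 c2 c3) auto
  have hk: "homeomorphism S T h k"
  proof (rule homeomorphismI[OF hc kc])
    show "h ` S \<subseteq> T" by (auto simp: h_def S_def T_def dist_norm norm_minus_commute)
    show "k ` T \<subseteq> S" by (auto simp: k_def S_def T_def dist_norm)
    show "k (h x) = x" if "x \<in> S" for x
    proof -
      have "\<psi> (snd x) \<noteq> 0" using nz sS that by auto
      then show ?thesis by (cases x) (simp add: h_def k_def field_simps)
    qed
    show "h (k y) = y" if "y \<in> T" for y
    proof -
      have "\<psi> (snd y + v0) \<noteq> 0" using nz sT that by auto
      then show ?thesis by (cases y) (simp add: h_def k_def field_simps)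
    qed
  qed
  have WS: "W \<subseteq> S" using Wz by (auto simp: S_def)
  have oV: "open (h ` W)"
  proof -
    have "openin (top_of_set S) W" using W(1) WS by (subst openin_open_eq) (auto simp: S_def open_Times)
    from homeomorphism_imp_open_map[OF hk this] have "openin (top_of_set T) (h ` W)" .
    then show ?thesis by (rule openin_open_trans) (simp add: T_def open_Times)
  qed
  have hkW: "homeomorphism W (h ` W) h k"
    by (rule homeomorphism_of_subsets[OF hk WS]) (use WS in auto)
  have ps0: "\<psi> v0 \<noteq> 0" using nz d by auto
  have p20: "\<phi>2 v0 = u0"
  proof -
    have "\<phi>1 v0 - \<phi>2 v0 = (v0 - v0)^m * \<psi> v0" using df d by auto
    then show ?thesis using m p0 by (simp add: power_0_left)
  qed
  have h0: "h (u0, v0) = 0" by (simp add: h_def p0 p20 zero_prod_def)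
  have key: "h ` {w \<in> W. g w = 0} = {(x, y). (x, y) \<in> h ` W \<and> x^2 + y^(2*m-1+1) = 0}"
  proof (intro equalityI subsetI)
    fix z assume "z \<in> h ` {w \<in> W. g w = 0}"
    then obtain u v where uv: "(u,v) \<in> W" "g (u,v) = 0" "z = h (u,v)" by auto
    have vb: "v \<in> ball v0 d" and br: "u = \<phi>1 v \<or> u = \<phi>2 v" using Wz uv by auto
    have psn: "\<psi> v \<noteq> 0" using nz vb by auto
    have dd: "\<phi>1 v - \<phi>2 v = (v - v0)^m * \<psi> v" using df vb by auto
    have "fst z = \<i> * (snd z)^m \<or> fst z = - \<i> * (snd z)^m"
      using br
    proof
      assume "u = \<phi>1 v"
      then have "fst z = \<i> * (\<phi>1 v - \<phi>2 v) / \<psi> v" by (simp add: uv h_def)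
      also have "\<dots> = \<i> * (snd z)^m" using psn by (simp add: dd uv h_def)
      finally show ?thesis by simp
    next
      assume "u = \<phi>2 v"
      then have "fst z = - \<i> * (\<phi>1 v - \<phi>2 v) / \<psi> v" by (simp add: uv h_def algebra_simps)
      also have "\<dots> = - \<i> * (snd z)^m" using psn by (simp add: dd uv h_def)
      finally show ?thesis by simp
    qed
    moreover have "z \<in> h ` W" using uv by auto
    ultimately show "z \<in> {(x, y). (x, y) \<in> h ` W \<and> x^2 + y^(2*m-1+1) = 0}"
      using model_iff[OF m, of "fst z" "snd z"] by (cases z) auto
  next
    fix z assume "z \<in> {(x, y). (x, y) \<in> h ` W \<and> x^2 + y^(2*m-1+1) = 0}"
    then have mz: "(fst z)^2 + (snd z)^(2*m-1+1) = 0" and "z \<in> h ` W" by (cases z, auto)+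
    then obtain u v where uv: "(u,v) \<in> W" "z = h (u,v)" by auto
    have vb: "v \<in> ball v0 d" using Wz uv by auto
    have psn: "\<psi> v \<noteq> 0" using nz vb by auto
    have dd: "\<phi>1 v - \<phi>2 v = (v - v0)^m * \<psi> v" using df vb by auto
    have sz: "snd z = v - v0" "fst z = \<i> * (2 * u - \<phi>1 v - \<phi>2 v) / \<psi> v" by (simp_all add: uv h_def)
    from mz have "fst z = \<i> * (snd z)^m \<or> fst z = - \<i> * (snd z)^m" using model_iff[OF m] by blast
    then have "u = \<phi>1 v \<or> u = \<phi>2 v"
    proof
      assume "fst z = \<i> * (snd z)^m"
      then have "\<i> * (2 * u - \<phi>1 v - \<phi>2 v) = \<i> * (\<phi>1 v - \<phi>2 v)" using psn by (simp add: sz dd field_simps)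
      then show ?thesis by auto
    next
      assume "fst z = - \<i> * (snd z)^m"
      then have "\<i> * (2 * u - \<phi>1 v - \<phi>2 v) = - \<i> * (\<phi>1 v - \<phi>2 v)" using psn by (simp add: sz dd field_simps)
      then have "2 * u = 2 * \<phi>2 v" by (simp add: algebra_simps)
      then show ?thesis by auto
    qed
    then have "g (u,v) = 0" using Wz uv by auto
    then show "z \<in> h ` {w \<in> W. g w = 0}" using uv by auto
  qed
  show ?thesis unfolding germA_def
    by (rule exI[of _ W], rule exI[of _ "h ` W"], rule exI[of _ h], rule exI[of _ k])
       (use W oV hkW h0 key in auto)
qed



lemma ball11: "z \<in> ball (1::complex) 1 \<Longrightarrow> z \<notin> \<real>\<^sub>\<le>\<^sub>0"
proof -
  assume "z \<in> ball 1 1"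
  then have "norm (1 - z) < 1" by (simp add: dist_norm)
  then have "\<bar>Re (1 - z)\<bar> < 1" using abs_Re_le_cmod[of "1-z"] by linarith
  then have "Re z > 0" by simp
  then show ?thesis by (auto simp: complex_nonpos_Reals_iff)
qed

lemma qalg:
  fixes a b c R D :: complex
  assumes "D = b + R" "D \<noteq> 0" "R^2 = b^2 - 4*a*c"
  shows "a * (- 2 * c / D)^2 + b * (- 2 * c / D) + c = 0"
proof -
  have "(a * (- 2 * c / D)^2 + b * (- 2 * c / D) + c) * D^2 = c * (4*a*c - 2*b*D + D^2)"
    using assms(2) by (simp add: field_simps power2_eq_square)
  also have "\<dots> = c * (4*a*c - b^2 + R^2)" using assms(1) by (simp add: algebra_simps power2_eq_square)
  also have "\<dots> = 0" using assms(3) by simp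
  finally show ?thesis using assms(2) by simp
qed

lemma qroot:
  fixes A B C :: "complex \<Rightarrow> complex"
  assumes cA: "continuous_on UNIV A" and cB: "continuous_on UNIV B" and cC: "continuous_on UNIV C"
    and B0: "B t0 \<noteq> 0" and C0: "C t0 = 0"
  shows "\<exists>d>0. \<exists>rt. continuous_on (ball t0 d) rt \<and> rt t0 = 0 \<and>
           (\<forall>t\<in>ball t0 d. A t * (rt t)^2 + B t * rt t + C t = 0)"
proof -
  define r where "r = (\<lambda>t. ((B t)^2 - 4 * A t * C t) / (B t0)^2)"
  have cr: "continuous_on UNIV r" unfolding r_def by (intro continuous_intros cA cB cC) (use B0 in auto)
  define S1 where "S1 = r -` ball 1 1"
  have oS1: "open S1" unfolding S1_def using cr by (simp add: open_vimage)
  have r0: "r t0 = 1" using B0 C0 by (simp add: r_def)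
  have t0S1: "t0 \<in> S1" by (simp add: S1_def r0)
  define R where "R = (\<lambda>t. B t0 * csqrt (r t))"
  have cR: "continuous_on S1 R" unfolding R_def
  proof (intro continuous_intros)
    show "continuous_on S1 (\<lambda>t. csqrt (r t))"
      by (rule continuous_on_compose2[OF continuous_on_csqrt continuous_on_subset[OF cr]])
         (use ball11 in \<open>auto simp: S1_def\<close>)
  qed
  define D where "D = (\<lambda>t. B t + R t)"
  have cD: "continuous_on S1 D" unfolding D_def by (intro continuous_intros continuous_on_subset[OF cB] cR) auto
  have D0: "D t0 \<noteq> 0" using B0 by (simp add: D_def R_def r0)
  define S2 where "S2 = D -` (-{0}) \<inter> S1"
  have oS2: "open S2" unfolding S2_def using cD oS1 by (simp add: continuous_on_open_vimage open_Compl)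
  have t0S2: "t0 \<in> S2" using D0 t0S1 by (simp add: S2_def)
  obtain d where d: "d > 0" "ball t0 d \<subseteq> S2" using oS2 t0S2 open_contains_ball by blast
  define rt where "rt = (\<lambda>t. - 2 * C t / D t)"
  have "continuous_on (ball t0 d) rt" unfolding rt_def
    by (intro continuous_intros continuous_on_subset[OF cC] continuous_on_subset[OF cD])
       (use d in \<open>auto simp: S2_def\<close>)
  moreover have "rt t0 = 0" by (simp add: rt_def C0)
  moreover have "A t * (rt t)^2 + B t * rt t + C t = 0" if "t \<in> ball t0 d" for t
  proof -
    have Dn: "D t \<noteq> 0" using that d by (auto simp: S2_def)
    have R2: "(R t)^2 = (B t)^2 - 4 * A t * C t" using B0
      by (simp add: R_def r_def power_mult_distrib)
    show ?thesis unfolding rt_def using qalg[OF _ Dn R2] by (simp add: D_def)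
  qed
  ultimately show ?thesis using d(1) by blast
qed



lemma nz_ball:
  fixes f :: "complex \<Rightarrow> complex"
  assumes "continuous_on (ball t0 d) f" "d > 0" "f t0 \<noteq> 0"
  shows "\<exists>d'>0. d' \<le> d \<and> (\<forall>t\<in>ball t0 d'. f t \<noteq> 0)"
proof -
  have "open (f -` (-{0}) \<inter> ball t0 d)" using assms(1) by (simp add: continuous_on_open_vimage open_Compl)
  moreover have "t0 \<in> f -` (-{0}) \<inter> ball t0 d" using assms by auto
  ultimately obtain e where e: "e > 0" "ball t0 e \<subseteq> f -` (-{0}) \<inter> ball t0 d" using open_contains_ball by blast
  show ?thesis
    by (rule exI[of _ "min e d"]) (use e assms(2) in auto)
qed

lemma openW:
  fixes N1 N2 :: "complex \<times> complex \<Rightarrow> complex"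
  assumes "continuous_on (UNIV \<times> ball t0 d) N1" "continuous_on (UNIV \<times> ball t0 d) N2"
  shows "open {w \<in> UNIV \<times> ball t0 d. N1 w \<noteq> 0 \<and> N2 w \<noteq> 0}"
proof -
  have o: "open (UNIV \<times> ball t0 d :: (complex \<times> complex) set)" by (simp add: open_Times)
  have "open (N1 -` (-{0}) \<inter> (UNIV \<times> ball t0 d))" using assms(1) o by (simp add: continuous_on_open_vimage open_Compl)
  moreover have "open (N2 -` (-{0}) \<inter> (UNIV \<times> ball t0 d))" using assms(2) o by (simp add: continuous_on_open_vimage open_Compl)
  ultimately have "open ((N1 -` (-{0}) \<inter> (UNIV \<times> ball t0 d)) \<inter> (N2 -` (-{0}) \<inter> (UNIV \<times> ball t0 d)))" by auto
  moreover have "(N1 -` (-{0}) \<inter> (UNIV \<times> ball t0 d)) \<inter> (N2 -` (-{0}) \<inter> (UNIV \<times> ball t0 d)) =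
     {w \<in> UNIV \<times> ball t0 d. N1 w \<noteq> 0 \<and> N2 w \<noteq> 0}" by auto
  ultimately show ?thesis by simp
qed

lemma germA_swap:
  fixes g :: "complex \<times> complex \<Rightarrow> complex"
  assumes "germA (\<lambda>w. g (prod.swap w)) (v0, u0) n"
  shows "germA g (u0, v0) n"
proof -
  obtain U V and h k :: "complex \<times> complex \<Rightarrow> complex \<times> complex" where H: "open U" "open V" "(v0,u0) \<in> U" "homeomorphism U V h k" "h (v0,u0) = 0"
    "h ` {w \<in> U. g (prod.swap w) = 0} = {(x, y). (x, y) \<in> V \<and> x^2 + y^(n+1) = 0}"
    using assms unfolding germA_def by blast
  have sw: "homeomorphism (prod.swap ` U) U prod.swap prod.swap"
    by (rule homeomorphismI) (auto intro: continuous_intros simp: image_iff)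
  have hom: "homeomorphism (prod.swap ` U) V (h \<circ> prod.swap) (prod.swap \<circ> k)"
    by (rule homeomorphism_compose[OF sw H(4)])
  have o: "open (prod.swap ` U)"
  proof -
    have "prod.swap ` U = prod.swap -` U" by (force simp: image_iff)
    moreover have "open (prod.swap -` U)" by (rule open_vimage[OF H(1)]) (intro continuous_intros)
    ultimately show ?thesis by simp
  qed
  have e1: "prod.swap ` {w \<in> prod.swap ` U. g w = 0} = {w \<in> U. g (prod.swap w) = 0}"
  proof (intro equalityI subsetI)
    fix x assume "x \<in> prod.swap ` {w \<in> prod.swap ` U. g w = 0}"
    then show "x \<in> {w \<in> U. g (prod.swap w) = 0}" by auto
  next
    fix x assume x: "x \<in> {w \<in> U. g (prod.swap w) = 0}"
    then have "prod.swap x \<in> {w \<in> prod.swap ` U. g w = 0}" by auto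
    then have "prod.swap (prod.swap x) \<in> prod.swap ` {w \<in> prod.swap ` U. g w = 0}" by (rule imageI)
    then show "x \<in> prod.swap ` {w \<in> prod.swap ` U. g w = 0}" by simp
  qed
  have "(h \<circ> prod.swap) ` {w \<in> prod.swap ` U. g w = 0} = h ` {w \<in> U. g (prod.swap w) = 0}"
    by (simp only: image_comp[symmetric] e1)
  then have "open (prod.swap ` U) \<and> open V \<and> (u0, v0) \<in> prod.swap ` U \<and>
     homeomorphism (prod.swap ` U) V (h \<circ> prod.swap) (prod.swap \<circ> k) \<and> (h \<circ> prod.swap) (u0, v0) = 0 \<and>
     (h \<circ> prod.swap) ` {w \<in> prod.swap ` U. g w = 0} = {(x, y). (x, y) \<in> V \<and> x^2 + y^(n+1) = 0}"
    using H hom o by (simp add: image_iff) (metis swap_simp)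
  then show ?thesis unfolding germA_def by blast
qed



lemma fac:
  fixes A B C e r :: complex
  assumes "A * r^2 + B * r + C = 0"
  shows "A * e^2 + B * e + C = (e - r) * (A * (e + r) + B)"
proof -
  have "(e - r) * (A*(e+r) + B) - (A*e^2 + B*e + C) = -(A*r^2 + B*r + C)"
    by (simp add: algebra_simps power2_eq_square)
  then show ?thesis using assms by simp
qed

lemma sub2: "(a::complex) + b = 0 \<Longrightarrow> c + d = 0 \<Longrightarrow> a - c = -b - -d"
  by (metis eq_neg_iff_add_eq_0)

lemma core_trans:
  fixes \<alpha> \<beta> \<gamma> lm mv az c' u0 :: complex
  assumes c': "c' \<noteq> 0" and q0: "\<alpha>*u0^2 + \<beta>*u0 + \<gamma> = 0" and q1: "2*\<alpha>*u0 + \<beta> \<noteq> 0"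
  shows "germA (\<lambda>(u,v). (\<alpha>*u^2 + \<beta>*u + \<gamma> + (lm*u + mv)* v + az* v^2)^2 - c'* v^4) (u0,0) 3"
proof -
  define s where "s = csqrt c'"
  have s2: "s^2 = c'" by (simp add: s_def)
  have sn: "s \<noteq> 0" using c' s2 by auto
  define qp where "qp = 2*\<alpha>*u0 + \<beta>"
  define l0 where "l0 = lm*u0 + mv"
  have "\<exists>d>0. \<exists>rt. continuous_on (ball 0 d) rt \<and> rt 0 = 0 \<and>
           (\<forall>t\<in>ball 0 d. \<alpha> * (rt t)^2 + (qp + lm*t) * rt t + (l0*t + (az - s)*t^2) = 0)"
    by (rule qroot) (auto intro!: continuous_intros simp: qp_def q1)
  then obtain d1 e1 where d1: "d1 > 0" "continuous_on (ball 0 d1) e1" "e1 0 = 0"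
      "\<forall>v\<in>ball 0 d1. \<alpha> * (e1 v)^2 + (qp + lm* v) * e1 v + (l0* v + (az - s)* v^2) = 0"
    by blast
  have "\<exists>d>0. \<exists>rt. continuous_on (ball 0 d) rt \<and> rt 0 = 0 \<and>
           (\<forall>t\<in>ball 0 d. \<alpha> * (rt t)^2 + (qp + lm*t) * rt t + (l0*t + (az + s)*t^2) = 0)"
    by (rule qroot) (auto intro!: continuous_intros simp: qp_def q1)
  then obtain d2 e2 where d2: "d2 > 0" "continuous_on (ball 0 d2) e2" "e2 0 = 0"
      "\<forall>v\<in>ball 0 d2. \<alpha> * (e2 v)^2 + (qp + lm* v) * e2 v + (l0* v + (az + s)* v^2) = 0"
    by blast
  define d3 where "d3 = min d1 d2"
  have d3: "d3 > 0" "ball 0 d3 \<subseteq> ball 0 d1" "ball 0 d3 \<subseteq> ball 0 d2" using d1 d2 by (auto simp: d3_def)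
  have ce1: "continuous_on (ball 0 d3) e1" by (rule continuous_on_subset[OF d1(2) d3(2)])
  have ce2: "continuous_on (ball 0 d3) e2" by (rule continuous_on_subset[OF d2(2) d3(3)])
  define M where "M = (\<lambda>v. \<alpha>*(e1 v + e2 v) + qp + lm* v)"
  have cM: "continuous_on (ball 0 d3) M" unfolding M_def by (intro continuous_intros ce1 ce2)
  have M0: "M 0 \<noteq> 0" using q1 d1 d2 by (simp add: M_def qp_def)
  obtain d where d: "d > 0" "d \<le> d3" "\<forall>v\<in>ball 0 d. M v \<noteq> 0" using nz_ball[OF cM d3(1) M0] by blast
  have dsub: "ball 0 d \<subseteq> ball 0 d3" using d by auto
  define \<psi> where "\<psi> = (\<lambda>v. 2 * s / M v)"
  define \<phi>1 where "\<phi>1 = (\<lambda>v. u0 + e1 v)"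
  define \<phi>2 where "\<phi>2 = (\<lambda>v. u0 + e2 v)"
  have c\<phi>1: "continuous_on (ball 0 d) \<phi>1" unfolding \<phi>1_def by (intro continuous_intros continuous_on_subset[OF ce1 dsub])
  have c\<phi>2: "continuous_on (ball 0 d) \<phi>2" unfolding \<phi>2_def by (intro continuous_intros continuous_on_subset[OF ce2 dsub])
  have c\<psi>: "continuous_on (ball 0 d) \<psi>" unfolding \<psi>_def
    by (intro continuous_intros continuous_on_subset[OF cM dsub]) (use d in auto)
  have n\<psi>: "\<forall>v\<in>ball 0 d. \<psi> v \<noteq> 0" using d sn by (auto simp: \<psi>_def)
  have df: "\<forall>v\<in>ball 0 d. \<phi>1 v - \<phi>2 v = (v - 0)^2 * \<psi> v"
  proof
    fix v :: complex assume v: "v \<in> ball 0 d"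
    then have v1: "v \<in> ball 0 d1" and v2: "v \<in> ball 0 d2" using dsub d3(2,3) by blast+
    have r1: "\<alpha> * (e1 v)^2 + (qp + lm* v) * e1 v + (l0* v + (az - s)* v^2) = 0" using d1(4) v1 by auto
    have r2: "\<alpha> * (e2 v)^2 + (qp + lm* v) * e2 v + (l0* v + (az + s)* v^2) = 0" using d2(4) v2 by auto
    have "(e1 v - e2 v) * M v = 2 * s * v^2"
    proof -
      have "(e1 v - e2 v) * M v = (\<alpha> * (e1 v)^2 + (qp + lm* v) * e1 v) - (\<alpha> * (e2 v)^2 + (qp + lm* v) * e2 v)"
        by (simp add: M_def algebra_simps power2_eq_square)
      also have "\<dots> = (- (l0* v + (az - s)* v^2)) - (- (l0* v + (az + s)* v^2))"
        using sub2[OF r1 r2] .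
      also have "\<dots> = 2 * s * v^2" by (simp add: algebra_simps)
      finally show ?thesis .
    qed
    moreover have "M v \<noteq> 0" using d v by auto
    ultimately show "\<phi>1 v - \<phi>2 v = (v - 0)^2 * \<psi> v"
      by (simp add: \<phi>1_def \<phi>2_def \<psi>_def field_simps)
  qed
  define N1 where "N1 = (\<lambda>w::complex\<times>complex. \<alpha> * ((fst w - u0) + e1 (snd w)) + (qp + lm * snd w))"
  define N2 where "N2 = (\<lambda>w::complex\<times>complex. \<alpha> * ((fst w - u0) + e2 (snd w)) + (qp + lm * snd w))"
  have sS: "\<forall>w\<in>UNIV \<times> ball 0 d. snd w \<in> ball 0 d" by auto
  have cN1: "continuous_on (UNIV \<times> ball 0 d) N1" unfolding N1_def
    by (intro continuous_intros cont_snd_comp[OF continuous_on_subset[OF ce1 dsub] sS])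
  have cN2: "continuous_on (UNIV \<times> ball 0 d) N2" unfolding N2_def
    by (intro continuous_intros cont_snd_comp[OF continuous_on_subset[OF ce2 dsub] sS])
  define W where "W = {w \<in> UNIV \<times> ball 0 d. N1 w \<noteq> 0 \<and> N2 w \<noteq> 0}"
  have oW: "open W" unfolding W_def by (rule openW[OF cN1 cN2])
  have inW: "(u0, 0) \<in> W" using d q1 d1 d2 by (simp add: W_def N1_def N2_def qp_def)
  have Wz: "\<forall>u v. (u, v) \<in> W \<longrightarrow> v \<in> ball 0 d \<and>
      ((\<lambda>(u,v). (\<alpha>*u^2 + \<beta>*u + \<gamma> + (lm*u + mv)* v + az* v^2)^2 - c'* v^4) (u, v) = 0 \<longleftrightarrow> u = \<phi>1 v \<or> u = \<phi>2 v)"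
  proof (intro allI impI conjI)
    fix u v :: complex assume uv: "(u, v) \<in> W"
    then show v: "v \<in> ball 0 d" by (simp add: W_def)
    then have v1: "v \<in> ball 0 d1" and v2: "v \<in> ball 0 d2" using dsub d3(2,3) by blast+
    have r1: "\<alpha> * (e1 v)^2 + (qp + lm* v) * e1 v + (l0* v + (az - s)* v^2) = 0" using d1(4) v1 by auto
    have r2: "\<alpha> * (e2 v)^2 + (qp + lm* v) * e2 v + (l0* v + (az + s)* v^2) = 0" using d2(4) v2 by auto
    define f where "f = \<alpha>*u^2 + \<beta>*u + \<gamma> + (lm*u + mv)* v + az* v^2"
    have f1: "f - s* v^2 = \<alpha> * (u-u0)^2 + (qp + lm* v) * (u-u0) + (l0* v + (az - s)* v^2)"
    proof -
      have "(f - s* v^2) - (\<alpha> * (u-u0)^2 + (qp + lm* v) * (u-u0) + (l0* v + (az - s)* v^2)) = \<alpha>*u0^2 + \<beta>*u0 + \<gamma>"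
        by (simp add: f_def qp_def l0_def algebra_simps power2_eq_square)
      then show ?thesis using q0 by simp
    qed
    have f2: "f + s* v^2 = \<alpha> * (u-u0)^2 + (qp + lm* v) * (u-u0) + (l0* v + (az + s)* v^2)"
    proof -
      have "(f + s* v^2) - (\<alpha> * (u-u0)^2 + (qp + lm* v) * (u-u0) + (l0* v + (az + s)* v^2)) = \<alpha>*u0^2 + \<beta>*u0 + \<gamma>"
        by (simp add: f_def qp_def l0_def algebra_simps power2_eq_square)
      then show ?thesis using q0 by simp
    qed
    have g: "f^2 - c'* v^4 = (f - s* v^2) * (f + s* v^2)"
      by (simp add: s2[symmetric] algebra_simps power2_eq_square power4_eq_xxxx)
    have "f - s* v^2 = ((u - u0) - e1 v) * N1 (u,v)"
      unfolding f1 N1_def using fac[OF r1] by simp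
    moreover have "f + s* v^2 = ((u - u0) - e2 v) * N2 (u,v)"
      unfolding f2 N2_def using fac[OF r2] by simp
    moreover have "N1 (u,v) \<noteq> 0" "N2 (u,v) \<noteq> 0" using uv by (auto simp: W_def)
    ultimately have "f^2 - c'* v^4 = 0 \<longleftrightarrow> (u - u0) - e1 v = 0 \<or> (u - u0) - e2 v = 0"
      using g by simp
    then show "(\<lambda>(u,v). (\<alpha>*u^2 + \<beta>*u + \<gamma> + (lm*u + mv)* v + az* v^2)^2 - c'* v^4) (u, v) = 0 \<longleftrightarrow> u = \<phi>1 v \<or> u = \<phi>2 v"
      unfolding f_def \<phi>1_def \<phi>2_def by (simp add: algebra_simps)
  qed
  have "\<phi>1 0 = u0" by (simp add: \<phi>1_def d1)
  from twograph[OF d(1) c\<phi>1 c\<phi>2 c\<psi> n\<psi> df this _ oW inW Wz]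
  show ?thesis by simp
qed



lemma pw4: "(s::complex) * ((x^2*E1)^2 + (x^2*E2)^2) / M = x^4 * (s * (E1^2 + E2^2) / M)"
  by (simp add: algebra_simps power2_eq_square power4_eq_xxxx)

lemma core_tang:
  fixes \<alpha> \<beta> \<gamma> lm mv az c' u0 :: complex
  assumes c': "c' \<noteq> 0" and an: "\<alpha> \<noteq> 0" and q0: "\<alpha>*u0^2 + \<beta>*u0 + \<gamma> = 0" and q1: "2*\<alpha>*u0 + \<beta> = 0"
    and l1: "lm*u0 + mv \<noteq> 0"
  shows "germA (\<lambda>(u,v). (\<alpha>*u^2 + \<beta>*u + \<gamma> + (lm*u + mv)* v + az* v^2)^2 - c'* v^4) (u0,0) 7"
proof -
  define s where "s = csqrt c'"
  have s2: "s^2 = c'" by (simp add: s_def)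
  have sn: "s \<noteq> 0" using c' s2 by auto
  define l0 where "l0 = lm*u0 + mv"
  have qf: "\<alpha>*u^2 + \<beta>*u + \<gamma> = \<alpha>*(u-u0)^2" for u
  proof -
    have b: "\<beta> = -2*\<alpha>*u0" using q1 by (metis add.commute eq_neg_iff_add_eq_0 mult_minus_left)
    have "\<gamma> - \<alpha>*u0^2 = \<alpha>*u0^2 + \<beta>*u0 + \<gamma>" unfolding b by (simp add: algebra_simps power2_eq_square)
    then have c: "\<gamma> = \<alpha>*u0^2" using q0 by simp
    show ?thesis unfolding b c by (simp add: algebra_simps power2_eq_square)
  qed
  have "\<exists>d>0. \<exists>rt. continuous_on (ball u0 d) rt \<and> rt u0 = 0 \<and>
           (\<forall>t\<in>ball u0 d. (az - s) * (rt t)^2 + (lm*t + mv) * rt t + \<alpha>*(t-u0)^2 = 0)"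
    by (rule qroot) (auto intro!: continuous_intros simp: l1)
  then obtain d1 e1 where d1: "d1 > 0" "continuous_on (ball u0 d1) e1" "e1 u0 = 0"
      "\<forall>t\<in>ball u0 d1. (az - s) * (e1 t)^2 + (lm*t + mv) * e1 t + \<alpha>*(t-u0)^2 = 0"
    by blast
  have "\<exists>d>0. \<exists>rt. continuous_on (ball u0 d) rt \<and> rt u0 = 0 \<and>
           (\<forall>t\<in>ball u0 d. (az + s) * (rt t)^2 + (lm*t + mv) * rt t + \<alpha>*(t-u0)^2 = 0)"
    by (rule qroot) (auto intro!: continuous_intros simp: l1)
  then obtain d2 e2 where d2: "d2 > 0" "continuous_on (ball u0 d2) e2" "e2 u0 = 0"
      "\<forall>t\<in>ball u0 d2. (az + s) * (e2 t)^2 + (lm*t + mv) * e2 t + \<alpha>*(t-u0)^2 = 0"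
    by blast
  define d3 where "d3 = min d1 d2"
  have d3: "d3 > 0" "ball u0 d3 \<subseteq> ball u0 d1" "ball u0 d3 \<subseteq> ball u0 d2" using d1 d2 by (auto simp: d3_def)
  have ce1: "continuous_on (ball u0 d3) e1" by (rule continuous_on_subset[OF d1(2) d3(2)])
  have ce2: "continuous_on (ball u0 d3) e2" by (rule continuous_on_subset[OF d2(2) d3(3)])
  define D1 where "D1 = (\<lambda>t. (az - s) * e1 t + (lm*t + mv))"
  define D2 where "D2 = (\<lambda>t. (az + s) * e2 t + (lm*t + mv))"
  define M where "M = (\<lambda>t. az * (e1 t + e2 t) + (lm*t + mv))"
  define K where "K = (\<lambda>t. D1 t * D2 t * M t)"
  have cK: "continuous_on (ball u0 d3) K" unfolding K_def D1_def D2_def M_def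
    by (intro continuous_intros ce1 ce2)
  have K0: "K u0 \<noteq> 0" using l1 d1 d2 by (simp add: K_def D1_def D2_def M_def)
  obtain d4 where d4: "d4 > 0" "d4 \<le> d3" "\<forall>t\<in>ball u0 d4. K t \<noteq> 0" using nz_ball[OF cK d3(1) K0] by blast
  have d4s: "ball u0 d4 \<subseteq> ball u0 d3" using d4 by auto
  have nD: "D1 t \<noteq> 0" "D2 t \<noteq> 0" "M t \<noteq> 0" if "t \<in> ball u0 d4" for t
    using d4(3) that by (auto simp: K_def)
  define \<psi> where "\<psi> = (\<lambda>t. s * ((-\<alpha> / D1 t)^2 + (-\<alpha> / D2 t)^2) / M t)"
  have c\<psi>4: "continuous_on (ball u0 d4) \<psi>" unfolding \<psi>_def D1_def D2_def M_def
    by (intro continuous_intros continuous_on_subset[OF ce1 d4s] continuous_on_subset[OF ce2 d4s])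
       (use nD in \<open>auto simp: D1_def D2_def M_def\<close>)
  have \<psi>0: "\<psi> u0 \<noteq> 0" using l1 d1 d2 sn an by (simp add: \<psi>_def D1_def D2_def M_def)
  obtain d where d: "d > 0" "d \<le> d4" "\<forall>t\<in>ball u0 d. \<psi> t \<noteq> 0" using nz_ball[OF c\<psi>4 d4(1) \<psi>0] by blast
  have dsub: "ball u0 d \<subseteq> ball u0 d4" using d by auto
  have dsub3: "ball u0 d \<subseteq> ball u0 d3" using dsub d4s by blast
  have c\<psi>: "continuous_on (ball u0 d) \<psi>" by (rule continuous_on_subset[OF c\<psi>4 dsub])
  have ce1': "continuous_on (ball u0 d) e1" by (rule continuous_on_subset[OF ce1 dsub3])
  have ce2': "continuous_on (ball u0 d) e2" by (rule continuous_on_subset[OF ce2 dsub3])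
  have df: "\<forall>t\<in>ball u0 d. e1 t - e2 t = (t - u0)^4 * \<psi> t"
  proof
    fix t :: complex assume t: "t \<in> ball u0 d"
    then have t1: "t \<in> ball u0 d1" and t2: "t \<in> ball u0 d2" and t4: "t \<in> ball u0 d4"
      using dsub3 d3(2,3) dsub by blast+
    have r1: "(az - s) * (e1 t)^2 + (lm*t + mv) * e1 t + \<alpha>*(t-u0)^2 = 0" using d1(4) t1 by auto
    have r2: "(az + s) * (e2 t)^2 + (lm*t + mv) * e2 t + \<alpha>*(t-u0)^2 = 0" using d2(4) t2 by auto
    have h1: "e1 t * D1 t = - (\<alpha>*(t-u0)^2)"
    proof -
      have "e1 t * D1 t = (az - s) * (e1 t)^2 + (lm*t + mv) * e1 t" by (simp add: D1_def algebra_simps power2_eq_square)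
      then show ?thesis using r1 by (simp add: eq_neg_iff_add_eq_0)
    qed
    have h2: "e2 t * D2 t = - (\<alpha>*(t-u0)^2)"
    proof -
      have "e2 t * D2 t = (az + s) * (e2 t)^2 + (lm*t + mv) * e2 t" by (simp add: D2_def algebra_simps power2_eq_square)
      then show ?thesis using r2 by (simp add: eq_neg_iff_add_eq_0)
    qed
    have \<eta>1: "e1 t = (t-u0)^2 * (-\<alpha> / D1 t)" using h1 nD(1)[OF t4] by (simp add: field_simps)
    have \<eta>2: "e2 t = (t-u0)^2 * (-\<alpha> / D2 t)" using h2 nD(2)[OF t4] by (simp add: field_simps)
    have "(e1 t - e2 t) * M t - s * ((e1 t)^2 + (e2 t)^2) =
        ((az - s) * (e1 t)^2 + (lm*t + mv) * e1 t) - ((az + s) * (e2 t)^2 + (lm*t + mv) * e2 t)"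
      by (simp add: M_def algebra_simps power2_eq_square)
    also have "\<dots> = - (\<alpha>*(t-u0)^2) - - (\<alpha>*(t-u0)^2)" using sub2[OF r1 r2] .
    finally have "(e1 t - e2 t) * M t = s * ((e1 t)^2 + (e2 t)^2)" by simp
    then have "e1 t - e2 t = s * ((e1 t)^2 + (e2 t)^2) / M t" using nD(3)[OF t4] by (simp add: field_simps)
    also have "\<dots> = (t - u0)^4 * \<psi> t"
      unfolding \<psi>_def by (subst \<eta>1, subst \<eta>2) (rule pw4)
    finally show "e1 t - e2 t = (t - u0)^4 * \<psi> t" .
  qed
  define N1 where "N1 = (\<lambda>w::complex\<times>complex. (az - s) * (fst w + e1 (snd w)) + (lm * snd w + mv))"
  define N2 where "N2 = (\<lambda>w::complex\<times>complex. (az + s) * (fst w + e2 (snd w)) + (lm * snd w + mv))"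
  have sS: "\<forall>w\<in>UNIV \<times> ball u0 d. snd w \<in> ball u0 d" by auto
  have cN1: "continuous_on (UNIV \<times> ball u0 d) N1" unfolding N1_def
    by (intro continuous_intros cont_snd_comp[OF ce1' sS])
  have cN2: "continuous_on (UNIV \<times> ball u0 d) N2" unfolding N2_def
    by (intro continuous_intros cont_snd_comp[OF ce2' sS])
  define W where "W = {w \<in> UNIV \<times> ball u0 d. N1 w \<noteq> 0 \<and> N2 w \<noteq> 0}"
  have oW: "open W" unfolding W_def by (rule openW[OF cN1 cN2])
  have inW: "(0, u0) \<in> W" using d l1 d1 d2 by (simp add: W_def N1_def N2_def)
  define g where "g = (\<lambda>(u,v). (\<alpha>*u^2 + \<beta>*u + \<gamma> + (lm*u + mv)* v + az* v^2)^2 - c'* v^4)"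
  have Wz: "\<forall>a b. (a, b) \<in> W \<longrightarrow> b \<in> ball u0 d \<and>
      ((\<lambda>w. g (prod.swap w)) (a, b) = 0 \<longleftrightarrow> a = e1 b \<or> a = e2 b)"
  proof (intro allI impI conjI)
    fix a b :: complex assume ab: "(a, b) \<in> W"
    then show bb: "b \<in> ball u0 d" by (simp add: W_def)
    then have t1: "b \<in> ball u0 d1" and t2: "b \<in> ball u0 d2" using dsub3 d3(2,3) by blast+
    have r1: "(az - s) * (e1 b)^2 + (lm*b + mv) * e1 b + \<alpha>*(b-u0)^2 = 0" using d1(4) t1 by auto
    have r2: "(az + s) * (e2 b)^2 + (lm*b + mv) * e2 b + \<alpha>*(b-u0)^2 = 0" using d2(4) t2 by auto
    define f where "f = \<alpha>*b^2 + \<beta>*b + \<gamma> + (lm*b + mv)* a + az* a^2"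
    have f1: "f - s* a^2 = (az - s) * a^2 + (lm*b + mv) * a + \<alpha>*(b-u0)^2"
      unfolding f_def qf by (simp add: algebra_simps)
    have f2: "f + s* a^2 = (az + s) * a^2 + (lm*b + mv) * a + \<alpha>*(b-u0)^2"
      unfolding f_def qf by (simp add: algebra_simps)
    have gg: "f^2 - c'* a^4 = (f - s* a^2) * (f + s* a^2)"
      by (simp add: s2[symmetric] algebra_simps power2_eq_square power4_eq_xxxx)
    have "f - s* a^2 = (a - e1 b) * N1 (a,b)"
      unfolding f1 N1_def using fac[OF r1] by simp
    moreover have "f + s* a^2 = (a - e2 b) * N2 (a,b)"
      unfolding f2 N2_def using fac[OF r2] by simp
    moreover have "N1 (a,b) \<noteq> 0" "N2 (a,b) \<noteq> 0" using ab by (auto simp: W_def)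
    ultimately have "f^2 - c'* a^4 = 0 \<longleftrightarrow> a - e1 b = 0 \<or> a - e2 b = 0"
      using gg by simp
    then show "(\<lambda>w. g (prod.swap w)) (a, b) = 0 \<longleftrightarrow> a = e1 b \<or> a = e2 b"
      unfolding f_def g_def by simp
  qed
  have "germA (\<lambda>w. g (prod.swap w)) (0, u0) (2*4-1)"
    by (rule twograph[OF d(1) ce1' ce2' c\<psi> d(3) df d1(3) _ oW inW Wz]) simp
  then have "germA g (u0, 0) 7" using germA_swap by simp
  then show ?thesis by (simp add: g_def)
qed



lemma binfac:
  fixes \<alpha> \<beta> \<gamma> :: complex
  shows "\<exists>a b c d. \<alpha> = a*c \<and> \<beta> = a*d + b*c \<and> \<gamma> = b*d"
proof (cases "\<alpha> = 0")
  case True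
  then show ?thesis by (intro exI[of _ 0] exI[of _ 1] exI[of _ \<beta>] exI[of _ \<gamma>]) simp
next
  case False
  define D where "D = csqrt (\<beta>^2 - 4*\<alpha>*\<gamma>)"
  have D2: "D^2 = \<beta>^2 - 4*\<alpha>*\<gamma>" by (simp add: D_def)
  show ?thesis
  proof (intro exI conjI)
    show "\<alpha> = \<alpha> * 1" by simp
    show "\<beta> = \<alpha> * ((\<beta> + D)/(2*\<alpha>)) + ((\<beta> - D)/2) * 1" using False by (simp add: field_simps)
    have "((\<beta> - D)/2) * ((\<beta> + D)/(2*\<alpha>)) = (\<beta>^2 - D^2)/(4*\<alpha>)" using False
      by (simp add: field_simps power2_eq_square)
    also have "\<dots> = \<gamma>" using False by (simp add: D2)
    finally show "\<gamma> = ((\<beta> - D)/2) * ((\<beta> + D)/(2*\<alpha>))" by simp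
  qed
qed

lemma cr1: "(a::complex)*d - b*c \<noteq> 0 \<Longrightarrow> a*((d*P - b*Q)/(a*d - b*c)) + b*((a*Q - c*P)/(a*d - b*c)) = P"
proof -
  assume h: "a*d - b*c \<noteq> 0"
  have "a*((d*P - b*Q)/(a*d - b*c)) + b*((a*Q - c*P)/(a*d - b*c)) = (a*(d*P - b*Q) + b*(a*Q - c*P))/(a*d - b*c)"
    by (simp add: add_divide_distrib)
  also have "a*(d*P - b*Q) + b*(a*Q - c*P) = P * (a*d - b*c)" by (simp add: algebra_simps)
  finally show ?thesis using h by simp
qed

lemma cr2: "(a::complex)*d - b*c \<noteq> 0 \<Longrightarrow> c*((d*P - b*Q)/(a*d - b*c)) + d*((a*Q - c*P)/(a*d - b*c)) = Q"
proof -
  assume h: "a*d - b*c \<noteq> 0"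
  have "c*((d*P - b*Q)/(a*d - b*c)) + d*((a*Q - c*P)/(a*d - b*c)) = (c*(d*P - b*Q) + d*(a*Q - c*P))/(a*d - b*c)"
    by (simp add: add_divide_distrib)
  also have "c*(d*P - b*Q) + d*(a*Q - c*P) = Q * (a*d - b*c)" by (simp add: algebra_simps)
  finally show ?thesis using h by simp
qed

lemma cr3: "(a::complex)*d - b*c \<noteq> 0 \<Longrightarrow> (d*(a*X + b*Y) - b*(c*X + d*Y))/(a*d - b*c) = X"
proof -
  assume h: "a*d - b*c \<noteq> 0"
  have "d*(a*X + b*Y) - b*(c*X + d*Y) = X * (a*d - b*c)" by (simp add: algebra_simps)
  then show ?thesis using h by simp
qed

lemma cr4: "(a::complex)*d - b*c \<noteq> 0 \<Longrightarrow> (a*(c*X + d*Y) - c*(a*X + b*Y))/(a*d - b*c) = Y"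
proof -
  assume h: "a*d - b*c \<noteq> 0"
  have "a*(c*X + d*Y) - c*(a*X + b*Y) = Y * (a*d - b*c)" by (simp add: algebra_simps)
  then show ?thesis using h by simp
qed

lemma lin_a1:
  fixes g :: "complex \<times> complex \<Rightarrow> complex"
  assumes det: "a*d - b*c \<noteq> 0" and W: "open W" "(u0, v0) \<in> W"
    and Wz: "\<forall>u v. (u, v) \<in> W \<longrightarrow> (g (u, v) = 0 \<longleftrightarrow> (a*(u-u0) + b*(v-v0)) * (c*(u-u0) + d*(v-v0)) = 0)"
  shows "germA g (u0, v0) 1"
proof -
  define L1 where "L1 = (\<lambda>w::complex\<times>complex. a*(fst w-u0) + b*(snd w-v0))"
  define L2 where "L2 = (\<lambda>w::complex\<times>complex. c*(fst w-u0) + d*(snd w-v0))"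
  define h where "h = (\<lambda>w. ((L1 w + L2 w)/2, (L1 w - L2 w)/(2*\<i>)))"
  define k where "k = (\<lambda>z::complex\<times>complex. (u0 + (d*(fst z + \<i>* snd z) - b*(fst z - \<i>* snd z))/(a*d - b*c),
                                             v0 + (a*(fst z - \<i>* snd z) - c*(fst z + \<i>* snd z))/(a*d - b*c)))"
  have hk: "homeomorphism UNIV UNIV h k"
  proof (rule homeomorphismI)
    show "continuous_on UNIV h" unfolding h_def L1_def L2_def by (intro continuous_intros) auto
    show "continuous_on UNIV k" unfolding k_def by (intro continuous_intros) (use det in auto)
    show "h ` UNIV \<subseteq> UNIV" "k ` UNIV \<subseteq> UNIV" by auto
    show "k (h x) = x" if "x \<in> UNIV" for x
    proof -
      have e1: "fst (h x) + \<i>* snd (h x) = L1 x" and e2: "fst (h x) - \<i>* snd (h x) = L2 x"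
        by (simp_all add: h_def field_simps)
      have "k (h x) = (u0 + (d*L1 x - b*L2 x)/(a*d-b*c), v0 + (a*L2 x - c*L1 x)/(a*d-b*c))"
        by (simp add: k_def e1 e2)
      also have "\<dots> = x" using cr3[OF det] cr4[OF det] by (cases x) (simp add: L1_def L2_def)
      finally show ?thesis .
    qed
    show "h (k y) = y" if "y \<in> UNIV" for y
    proof -
      obtain x1 x2 where y: "y = (x1, x2)" by (cases y)
      have l1: "L1 (k y) = x1 + \<i>*x2" using cr1[OF det] by (simp add: L1_def k_def y)
      have l2: "L2 (k y) = x1 - \<i>*x2" using cr2[OF det] by (simp add: L2_def k_def y)
      show ?thesis using l1 l2 unfolding y by (simp add: h_def field_simps)
    qed
  qed
  have oV: "open (h ` W)"
    using homeomorphism_imp_open_map[OF hk, of W] W(1) by simp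
  have hkW: "homeomorphism W (h ` W) h k"
    by (rule homeomorphism_of_subsets[OF hk]) auto
  have h0: "h (u0, v0) = 0" by (simp add: h_def L1_def L2_def zero_prod_def)
  have id: "(fst (h w))^2 + (snd (h w))^(1+1) = L1 w * L2 w" for w
    by (simp add: h_def field_simps power2_eq_square)
  have Wz': "w \<in> W \<Longrightarrow> (g w = 0 \<longleftrightarrow> L1 w * L2 w = 0)" for w
    using Wz by (cases w) (simp add: L1_def L2_def)
  have key: "h ` {w \<in> W. g w = 0} = {(x, y). (x, y) \<in> h ` W \<and> x^2 + y^(1+1) = 0}"
  proof (intro equalityI subsetI)
    fix z assume "z \<in> h ` {w \<in> W. g w = 0}"
    then obtain w where w: "w \<in> W" "g w = 0" "z = h w" by auto
    then have "(fst z)^2 + (snd z)^(1+1) = 0" using id Wz' by simp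
    moreover have "z \<in> h ` W" using w by auto
    ultimately show "z \<in> {(x, y). (x, y) \<in> h ` W \<and> x^2 + y^(1+1) = 0}" by (cases z) auto
  next
    fix z assume "z \<in> {(x, y). (x, y) \<in> h ` W \<and> x^2 + y^(1+1) = 0}"
    then have m: "(fst z)^2 + (snd z)^(1+1) = 0" and "z \<in> h ` W" by (cases z, auto)+
    then obtain w where w: "w \<in> W" "z = h w" by auto
    then have "g w = 0" using m id Wz' by simp
    then show "z \<in> h ` {w \<in> W. g w = 0}" using w by auto
  qed
  have "open W \<and> open (h ` W) \<and> (u0, v0) \<in> W \<and> homeomorphism W (h ` W) h k \<and> h (u0, v0) = 0 \<and>
     h ` {w \<in> W. g w = 0} = {(x, y). (x, y) \<in> h ` W \<and> x^2 + y^(1+1) = 0}"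
    using W oV hkW h0 key by blast
  then show ?thesis unfolding germA_def by blast
qed



lemma F2_alt: "F2 a20 a11 a02 a10 a01 a00 = (\<lambda>w. a20 * (fst w)^2 + a11 * fst w * fst (snd w) + a02 * (fst (snd w))^2
   + (a10 * fst w + a01 * fst (snd w)) * snd (snd w) + a00 * (snd (snd w))^2)"
  by (auto simp: F2_def fun_eq_iff)

lemma hd_x: "((\<lambda>w::complex\<times>complex\<times>complex. fst w) has_derivative (\<lambda>h. fst h)) F"
  by (rule has_derivative_fst[OF has_derivative_ident])
lemma hd_y: "((\<lambda>w::complex\<times>complex\<times>complex. fst (snd w)) has_derivative (\<lambda>h. fst (snd h))) F"
  by (rule has_derivative_fst[OF has_derivative_snd[OF has_derivative_ident]])
lemma hd_z: "((\<lambda>w::complex\<times>complex\<times>complex. snd (snd w)) has_derivative (\<lambda>h. snd (snd h))) F"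
  by (rule has_derivative_snd[OF has_derivative_snd[OF has_derivative_ident]])

lemma F2_deriv:
  "(F2 a20 a11 a02 a10 a01 a00 has_derivative
     (\<lambda>h. (2*a20*x + a11*y + a10*z) * fst h + (a11*x + 2*a02*y + a01*z) * fst (snd h)
          + (a10*x + a01*y + 2*a00*z) * snd (snd h))) (at (x, y, z))"
  unfolding F2_alt
  by (rule has_derivative_eq_rhs, (rule hd_x hd_y hd_z derivative_intros)+)
     (auto simp: fun_eq_iff algebra_simps power2_eq_square)

lemma G_deriv:
  "((\<lambda>w. (F2 a20 a11 a02 a10 a01 a00 w)^2 - c' * (snd (snd w))^4) has_derivative
     (\<lambda>h. 2 * F2 a20 a11 a02 a10 a01 a00 (x,y,z) * ((2*a20*x + a11*y + a10*z) * fst h + (a11*x + 2*a02*y + a01*z) * fst (snd h)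
          + (a10*x + a01*y + 2*a00*z) * snd (snd h)) - 4 * c' * z^3 * snd (snd h))) (at (x, y, z))"
  by (rule has_derivative_eq_rhs, (rule F2_deriv hd_x hd_y hd_z derivative_intros)+)
     (auto simp: fun_eq_iff algebra_simps power2_eq_square eval_nat_numeral)

lemma deriv_zero_iff:
  fixes A B C :: complex
  assumes "(f has_derivative (\<lambda>h. A * fst h + B * fst (snd h) + C * snd (snd h))) (at p)"
  shows "(f has_derivative (\<lambda>_. 0)) (at p) \<longleftrightarrow> A = 0 \<and> B = 0 \<and> C = 0"
proof
  assume "(f has_derivative (\<lambda>_. 0)) (at p)"
  from has_derivative_unique[OF assms this]
  have e: "(\<lambda>h::complex\<times>complex\<times>complex. A * fst h + B * fst (snd h) + C * snd (snd h)) = (\<lambda>_. 0)" .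
  have "A = 0" using fun_cong[OF e, of "(1,0,0)"] by simp
  moreover have "B = 0" using fun_cong[OF e, of "(0,1,0)"] by simp
  moreover have "C = 0" using fun_cong[OF e, of "(0,0,1)"] by simp
  ultimately show "A = 0 \<and> B = 0 \<and> C = 0" by simp
next
  assume "A = 0 \<and> B = 0 \<and> C = 0"
  then show "(f has_derivative (\<lambda>_. 0)) (at p)" using assms by simp
qed

lemma sing_F_iff:
  "sing_pt (F2 a20 a11 a02 a10 a01 a00) (x,y,z) \<longleftrightarrow> on_curve (F2 a20 a11 a02 a10 a01 a00) (x,y,z) \<and>
     2*a20*x + a11*y + a10*z = 0 \<and> a11*x + 2*a02*y + a01*z = 0 \<and> a10*x + a01*y + 2*a00*z = 0"
  unfolding sing_pt_def using deriv_zero_iff[OF F2_deriv] by simp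

lemma sing_G_iff:
  "sing_pt (\<lambda>w. (F2 a20 a11 a02 a10 a01 a00 w)^2 - c' * (snd (snd w))^4) (x,y,z) \<longleftrightarrow>
     on_curve (\<lambda>w. (F2 a20 a11 a02 a10 a01 a00 w)^2 - c' * (snd (snd w))^4) (x,y,z) \<and>
     2 * F2 a20 a11 a02 a10 a01 a00 (x,y,z) * (2*a20*x + a11*y + a10*z) = 0 \<and>
     2 * F2 a20 a11 a02 a10 a01 a00 (x,y,z) * (a11*x + 2*a02*y + a01*z) = 0 \<and>
     2 * F2 a20 a11 a02 a10 a01 a00 (x,y,z) * (a10*x + a01*y + 2*a00*z) - 4 * c' * z^3 = 0"
proof -
  have "((\<lambda>w. (F2 a20 a11 a02 a10 a01 a00 w)^2 - c' * (snd (snd w))^4) has_derivative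
     (\<lambda>h. (2 * F2 a20 a11 a02 a10 a01 a00 (x,y,z) * (2*a20*x + a11*y + a10*z)) * fst h
        + (2 * F2 a20 a11 a02 a10 a01 a00 (x,y,z) * (a11*x + 2*a02*y + a01*z)) * fst (snd h)
        + (2 * F2 a20 a11 a02 a10 a01 a00 (x,y,z) * (a10*x + a01*y + 2*a00*z) - 4 * c' * z^3) * snd (snd h))) (at (x,y,z))"
    by (rule has_derivative_eq_rhs[OF G_deriv]) (auto simp: fun_eq_iff algebra_simps)
  then show ?thesis unfolding sing_pt_def using deriv_zero_iff by blast
qed

lemma germ_eq: "germ_type_a f p n = germA (\<lambda>w. f (chart p w)) (chart_pt p) n"
  by (simp add: germ_type_a_def germA_def)



lemma part1:
  fixes a20 a11 a02 a10 a01 a00 c' :: complex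
  assumes notLinf: "\<not> (a20 = 0 \<and> a11 = 0 \<and> a02 = 0)" and c': "c' \<noteq> 0"
    and Lp: "on_Linf p" and sm: "smooth_pt (F2 a20 a11 a02 a10 a01 a00) p"
  shows "germ_type_a (\<lambda>w. (F2 a20 a11 a02 a10 a01 a00 w)^2 - c' * (snd (snd w))^4) p
           (4 * I_Linf a20 a11 a02 p - 1)"
proof -
  obtain p1 p2 where p: "p = (p1, p2, 0)" using Lp by (cases p) (auto simp: on_Linf_def)
  have pn: "p1 \<noteq> 0 \<or> p2 \<noteq> 0" using Lp by (auto simp: on_Linf_def p zero_prod_def)
  have Fp: "a20*p1^2 + a11*p1*p2 + a02*p2^2 = 0"
    using sm by (simp add: smooth_pt_def on_curve_def p F2_def)
  have grad: "\<not> (2*a20*p1 + a11*p2 = 0 \<and> a11*p1 + 2*a02*p2 = 0 \<and> a10*p1 + a01*p2 = 0)"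
    using sm sing_F_iff[of a20 a11 a02 a10 a01 a00 p1 p2 0] by (auto simp: smooth_pt_def p)
  define G where "G = (\<lambda>w. (F2 a20 a11 a02 a10 a01 a00 w)^2 - c' * (snd (snd w))^4)"
  show ?thesis
  proof (cases "p2 = 0")
    case False
    define u0 where "u0 = p1 / p2"
    have cp: "chart p = (\<lambda>(u, v). (u, 1, v))" and cpp: "chart_pt p = (u0, 0)"
      using False by (simp_all add: chart_def chart_pt_def p u0_def)
    have Gc: "(\<lambda>w. G (chart p w)) = (\<lambda>(u,v). (a20*u^2 + a11*u + a02 + (a10*u + a01)* v + a00* v^2)^2 - c'* v^4)"
      by (auto simp: fun_eq_iff cp G_def F2_def)
    have p1e: "p1 = u0 * p2" using False by (simp add: u0_def)
    have q0: "a20*u0^2 + a11*u0 + a02 = 0"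
    proof -
      have "(a20*u0^2 + a11*u0 + a02) * p2^2 = a20*p1^2 + a11*p1*p2 + a02*p2^2"
        unfolding p1e by (simp add: algebra_simps power2_eq_square)
      then show ?thesis using Fp False by simp
    qed
    have FXe: "2*a20*p1 + a11*p2 = (2*a20*u0 + a11) * p2" unfolding p1e by (simp add: algebra_simps)
    have FYe: "a11*p1 + 2*a02*p2 = - u0 * (2*a20*u0 + a11) * p2"
    proof -
      have "a11*p1 + 2*a02*p2 + u0 * (2*a20*u0 + a11) * p2 = 2 * (a20*u0^2 + a11*u0 + a02) * p2"
        unfolding p1e by (simp add: algebra_simps power2_eq_square)
      then show ?thesis using q0 by (simp add: eq_neg_iff_add_eq_0)
    qed
    have FZe: "a10*p1 + a01*p2 = (a10*u0 + a01) * p2" unfolding p1e by (simp add: algebra_simps)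
    have Ipoly: "I_Linf a20 a11 a02 p = order 0 (if p1 \<noteq> 0 then [:0, a11*p1 + 2*a02*p2, a02:] else [:0, a11*p2, a20:])"
      using Fp by (simp add: I_Linf_def p)
    show ?thesis
    proof (cases "2*a20*u0 + a11 = 0")
      case False
      have I1: "I_Linf a20 a11 a02 p = 1"
      proof (cases "p1 = 0")
        case True
        then have "u0 = 0" by (simp add: u0_def)
        then have "a11*p2 \<noteq> 0" using False \<open>p2 \<noteq> 0\<close> by simp
        then show ?thesis unfolding Ipoly using True by (simp add: ord1)
      next
        case p1n: False
        then have "u0 \<noteq> 0" using p1e by auto
        then have "a11*p1 + 2*a02*p2 \<noteq> 0" unfolding FYe using False \<open>p2 \<noteq> 0\<close> by simp
        then show ?thesis unfolding Ipoly using p1n by (simp add: ord1)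
      qed
      have "germA (\<lambda>w. G (chart p w)) (chart_pt p) 3"
        unfolding Gc cpp by (rule core_trans[OF c' q0 False])
      then show ?thesis using I1 by (simp add: germ_eq G_def)
    next
      case True
      have l: "a10*u0 + a01 \<noteq> 0" using grad True \<open>p2 \<noteq> 0\<close> by (simp add: FXe FYe FZe)
      have an: "a20 \<noteq> 0"
      proof
        assume "a20 = 0"
        then have "a11 = 0" using True by simp
        then have "a02 = 0" using q0 \<open>a20 = 0\<close> by simp
        then show False using notLinf \<open>a20 = 0\<close> \<open>a11 = 0\<close> by simp
      qed
      have a11e: "a11 = -2*a20*u0" using True by (metis add.commute eq_neg_iff_add_eq_0 mult_minus_left)
      have a02e: "a02 = a20*u0^2"
      proof -
        have "a02 - a20*u0^2 = a20*u0^2 + a11*u0 + a02" unfolding a11e by (simp add: algebra_simps power2_eq_square)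
        then show ?thesis using q0 by simp
      qed
      have I2: "I_Linf a20 a11 a02 p = 2"
      proof (cases "p1 = 0")
        case True
        then have "u0 = 0" by (simp add: u0_def)
        then show ?thesis unfolding Ipoly using an a11e True by (simp add: ord2)
      next
        case p1n: False
        then have "u0 \<noteq> 0" using p1e by auto
        then have "a02 \<noteq> 0" using an a02e by simp
        moreover have "a11*p1 + 2*a02*p2 = 0" using FYe \<open>2*a20*u0 + a11 = 0\<close> by simp
        ultimately show ?thesis unfolding Ipoly using p1n by (simp add: ord2)
      qed
      have "germA (\<lambda>w. G (chart p w)) (chart_pt p) 7"
        unfolding Gc cpp by (rule core_tang[OF c' an q0 True l])
      then show ?thesis using I2 by (simp add: germ_eq G_def)
    qed
  next
    case True
    then have p1n: "p1 \<noteq> 0" using pn by simp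
    have cp: "chart p = (\<lambda>(u, v). (1, u, v))" and cpp: "chart_pt p = (0, 0)"
      using True p1n by (simp_all add: chart_def chart_pt_def p)
    have Gc: "(\<lambda>w. G (chart p w)) = (\<lambda>(u,v). (a02*u^2 + a11*u + a20 + (a01*u + a10)* v + a00* v^2)^2 - c'* v^4)"
      by (auto simp: fun_eq_iff cp G_def F2_def algebra_simps)
    have a20z: "a20 = 0" using Fp True p1n by simp
    have Ipoly: "I_Linf a20 a11 a02 p = order 0 [:0, a11*p1, a02:]"
      using True a20z p1n by (simp add: I_Linf_def p)
    have q0: "a02*0^2 + a11*0 + a20 = 0" using a20z by simp
    show ?thesis
    proof (cases "a11 = 0")
      case False
      have I1: "I_Linf a20 a11 a02 p = 1" unfolding Ipoly using False p1n by (simp add: ord1)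
      have q1: "2*a02*0 + a11 \<noteq> 0" using False by simp
      have "germA (\<lambda>w. G (chart p w)) (chart_pt p) 3"
        unfolding Gc cpp by (rule core_trans[OF c' q0 q1])
      then show ?thesis using I1 by (simp add: germ_eq G_def)
    next
      case a11z: True
      have an: "a02 \<noteq> 0" using notLinf a20z a11z by simp
      have l: "a01*0 + a10 \<noteq> 0" using grad True a20z a11z p1n by simp
      have I2: "I_Linf a20 a11 a02 p = 2" unfolding Ipoly using an a11z by (simp add: ord2)
      have q1: "2*a02*0 + a11 = 0" using a11z by simp
      have "germA (\<lambda>w. G (chart p w)) (chart_pt p) 7"
        unfolding Gc cpp by (rule core_tang[OF c' an q0 q1 l])
      then show ?thesis using I2 by (simp add: germ_eq G_def)
    qed
  qed
qed



lemma lin_form_app: "lin_form (l1, l2, l3) (x, y, z) = l1*x + l2*y + l3*z"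
  by (simp add: lin_form_def)

lemma conic_factor:
  fixes b20 b11 b02 b10 b01 b00 p1 p2 :: complex
  assumes pn: "p1 \<noteq> 0 \<or> p2 \<noteq> 0"
    and g1: "2*b20*p1 + b11*p2 = 0" and g2: "b11*p1 + 2*b02*p2 = 0" and g3: "b10*p1 + b01*p2 = 0"
  shows "\<exists>l1 l2. \<forall>w. F2 b20 b11 b02 b10 b01 b00 w = lin_form l1 w * lin_form l2 w"
proof (cases "p2 = 0")
  case False
  define r where "r = p1 / p2"
  have p1e: "p1 = r * p2" using False by (simp add: r_def)
  have h1: "b11 = -2*b20*r"
  proof -
    have "(2*b20*r + b11) * p2 = 0" using g1 unfolding p1e by (simp add: algebra_simps)
    then have "2*b20*r + b11 = 0" using False by simp
    then show ?thesis by (metis add.commute eq_neg_iff_add_eq_0 mult_minus_left)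
  qed
  have h2: "b02 = b20*r^2"
  proof -
    have "(b11*r + 2*b02) * p2 = 0" using g2 unfolding p1e by (simp add: algebra_simps)
    then have "b11*r + 2*b02 = 0" using False by simp
    then have "2*b02 = 2*(b20*r^2)" unfolding h1 by (simp add: algebra_simps power2_eq_square eq_neg_iff_add_eq_0)
    then show ?thesis by simp
  qed
  have h3: "b01 = -b10*r"
  proof -
    have "(b10*r + b01) * p2 = 0" using g3 unfolding p1e by (simp add: algebra_simps)
    then have "b10*r + b01 = 0" using False by simp
    then show ?thesis by (metis add.commute eq_neg_iff_add_eq_0 mult_minus_left)
  qed
  obtain a b c d where f: "b20 = a*c" "b10 = a*d + b*c" "b00 = b*d" using binfac by blast
  show ?thesis
  proof (intro exI allI)
    fix w :: "complex \<times> complex \<times> complex"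
    obtain x y z where w: "w = (x,y,z)" by (cases w)
    show "F2 b20 b11 b02 b10 b01 b00 w = lin_form (a, -a*r, b) w * lin_form (c, -c*r, d) w"
      unfolding w F2_def lin_form_app by (simp add: h1 h2 h3 f algebra_simps power2_eq_square)
  qed
next
  case True
  then have p1n: "p1 \<noteq> 0" using pn by simp
  have z: "b20 = 0" "b11 = 0" "b10 = 0" using g1 g2 g3 True p1n by simp_all
  obtain a b c d where f: "b02 = a*c" "b01 = a*d + b*c" "b00 = b*d" using binfac by blast
  show ?thesis
  proof (intro exI allI)
    fix w :: "complex \<times> complex \<times> complex"
    obtain x y z where w: "w = (x,y,z)" by (cases w)
    show "F2 b20 b11 b02 b10 b01 b00 w = lin_form (0, a, b) w * lin_form (0, c, d) w"
      unfolding w F2_def lin_form_app by (simp add: z f algebra_simps power2_eq_square)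
  qed
qed

lemma prod4: "(\<Prod>i<(4::nat). f i) = f 0 * f 1 * f 2 * (f 3 :: complex)"
  by (simp add: eval_nat_numeral mult_ac)

lemma part2:
  fixes a20 a11 a02 a10 a01 a00 c' :: complex
  assumes notLinf: "\<not> (a20 = 0 \<and> a11 = 0 \<and> a02 = 0)" and c': "c' \<noteq> 0"
    and Lp: "on_Linf p" and sg: "sing_pt (F2 a20 a11 a02 a10 a01 a00) p"
  shows "four_lines (\<lambda>w. (F2 a20 a11 a02 a10 a01 a00 w)^2 - c' * (snd (snd w))^4)"
proof -
  obtain p1 p2 where p: "p = (p1, p2, 0)" using Lp by (cases p) (auto simp: on_Linf_def)
  have pn: "p1 \<noteq> 0 \<or> p2 \<noteq> 0" using Lp by (auto simp: on_Linf_def p zero_prod_def)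
  have g: "2*a20*p1 + a11*p2 = 0" "a11*p1 + 2*a02*p2 = 0" "a10*p1 + a01*p2 = 0"
    using sg sing_F_iff[of a20 a11 a02 a10 a01 a00 p1 p2 0] by (simp_all add: p)
  define s where "s = csqrt c'"
  have s2: "s^2 = c'" by (simp add: s_def)
  obtain l1 l2 where L12: "\<forall>w. F2 a20 a11 a02 a10 a01 (a00 - s) w = lin_form l1 w * lin_form l2 w"
    using conic_factor[OF pn g] by blast
  obtain l3 l4 where L34: "\<forall>w. F2 a20 a11 a02 a10 a01 (a00 + s) w = lin_form l3 w * lin_form l4 w"
    using conic_factor[OF pn g] by blast
  define G where "G = (\<lambda>w. (F2 a20 a11 a02 a10 a01 a00 w)^2 - c' * (snd (snd w))^4)"
  have Gf: "G w = lin_form l1 w * lin_form l2 w * lin_form l3 w * lin_form l4 w" for w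
  proof -
    obtain x y z where w: "w = (x,y,z)" by (cases w)
    have "G w = F2 a20 a11 a02 a10 a01 (a00 - s) w * F2 a20 a11 a02 a10 a01 (a00 + s) w"
      unfolding G_def w F2_def by (simp add: s2[symmetric] algebra_simps power2_eq_square power4_eq_xxxx)
    then show ?thesis using L12 L34 by (simp add: mult_ac)
  qed
  obtain wst where wst: "G wst \<noteq> 0"
  proof -
    consider "a20 \<noteq> 0" | "a02 \<noteq> 0" | "a20 + a11 + a02 \<noteq> 0" using notLinf by force
    then show ?thesis
    proof cases
      case 1 then show ?thesis using that[of "(1,0,0)"] by (simp add: G_def F2_def)
    next
      case 2 then show ?thesis using that[of "(0,1,0)"] by (simp add: G_def F2_def)
    next
      case 3 then show ?thesis using that[of "(1,1,0)"] by (simp add: G_def F2_def)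
    qed
  qed
  define l where "l = (\<lambda>i. [l1, l2, l3, l4] ! i)"
  have nz: "lin_form (l i) wst \<noteq> 0" if "i < 4" for i
  proof -
    have "lin_form (l 0) wst * lin_form (l 1) wst * lin_form (l 2) wst * lin_form (l 3) wst \<noteq> 0"
      using wst Gf by (simp add: l_def)
    then show ?thesis using that by (auto simp: less_Suc_eq eval_nat_numeral)
  qed
  have "\<forall>i<4. l i \<noteq> 0"
  proof (intro allI impI)
    fix i :: nat assume "i < 4"
    show "l i \<noteq> 0"
    proof
      assume "l i = 0"
      then have "lin_form (l i) wst = 0" by (cases wst) (simp add: lin_form_def zero_prod_def)
      then show False using nz \<open>i < 4\<close> by simp
    qed
  qed
  moreover have "\<forall>w. G w = (\<Prod>i<4. lin_form (l i) w)"
    by (simp add: prod4 Gf l_def)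
  ultimately show ?thesis unfolding four_lines_def G_def[symmetric] by blast
qed



lemma euler: "x*(2*a20*x + a11*y + a10*z) + y*(a11*x + 2*a02*y + a01*z) + z*(a10*x + a01*y + 2*a00*z)
   = 2 * F2 a20 a11 a02 a10 a01 a00 (x,y,z)"
  by (simp add: F2_def algebra_simps power2_eq_square)

lemma part3:
  fixes a20 a11 a02 a10 a01 a00 c' :: complex
  assumes notLinf: "\<not> (a20 = 0 \<and> a11 = 0 \<and> a02 = 0)" and c': "c' \<noteq> 0"
    and fs: "finite_sing (\<lambda>w. (F2 a20 a11 a02 a10 a01 a00 w)^2 - c' * (snd (snd w))^4)"
    and sg: "sing_pt (\<lambda>w. (F2 a20 a11 a02 a10 a01 a00 w)^2 - c' * (snd (snd w))^4) p"
    and nF: "\<not> on_curve (F2 a20 a11 a02 a10 a01 a00) p"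
  shows "germ_type_a (\<lambda>w. (F2 a20 a11 a02 a10 a01 a00 w)^2 - c' * (snd (snd w))^4) p 1"
proof -
  define F where "F = F2 a20 a11 a02 a10 a01 a00"
  define G where "G = (\<lambda>w. (F w)^2 - c' * (snd (snd w))^4)"
  obtain x y z where p: "p = (x, y, z)" by (cases p)
  have SG: "on_curve G (x,y,z)" "2 * F (x,y,z) * (2*a20*x + a11*y + a10*z) = 0"
     "2 * F (x,y,z) * (a11*x + 2*a02*y + a01*z) = 0"
     "2 * F (x,y,z) * (a10*x + a01*y + 2*a00*z) - 4 * c' * z^3 = 0"
    using sg sing_G_iff[of a20 a11 a02 a10 a01 a00 c' x y z] by (simp_all add: p F_def G_def)
  have pnz: "p \<noteq> 0" and Gp: "(F (x,y,z))^2 = c' * z^4"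
    using SG(1) by (simp_all add: on_curve_def p G_def)
  have Fn: "F (x,y,z) \<noteq> 0" using nF pnz by (simp add: on_curve_def p F_def)
  have zn: "z \<noteq> 0" using Gp Fn by auto
  have FX: "2*a20*x + a11*y + a10*z = 0" using SG(2) Fn by simp
  have FY: "a11*x + 2*a02*y + a01*z = 0" using SG(3) Fn by simp
  define u0 where "u0 = x / z"
  define v0 where "v0 = y / z"
  have xe: "x = u0 * z" and ye: "y = v0 * z" using zn by (simp_all add: u0_def v0_def)
  define \<sigma> where "\<sigma> = F (x,y,z) / z^2"
  have \<sigma>n: "\<sigma> \<noteq> 0" using Fn zn by (simp add: \<sigma>_def)
  have \<sigma>2: "\<sigma>^2 = c'" using Gp zn by (simp add: \<sigma>_def power_divide field_simps)
  define f where "f = (\<lambda>u v. F (u, v, 1))"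
  have f0: "f u0 v0 = \<sigma>"
  proof -
    have "F (x,y,z) = z^2 * f u0 v0" unfolding xe ye f_def F_def F2_def by (simp add: algebra_simps power2_eq_square)
    then show ?thesis using zn by (simp add: \<sigma>_def)
  qed
  have fx0: "2*a20*u0 + a11* v0 + a10 = 0"
  proof -
    have "2*a20*x + a11*y + a10*z = z * (2*a20*u0 + a11* v0 + a10)" unfolding xe ye by (simp add: algebra_simps)
    then show ?thesis using FX zn by simp
  qed
  have fy0: "a11*u0 + 2*a02* v0 + a01 = 0"
  proof -
    have "a11*x + 2*a02*y + a01*z = z * (a11*u0 + 2*a02* v0 + a01)" unfolding xe ye by (simp add: algebra_simps)
    then show ?thesis using FY zn by simp
  qed
  have taylor: "f (u0 + d1) (v0 + d2) = f u0 v0 + (2*a20*u0 + a11* v0 + a10) * d1 + (a11*u0 + 2*a02* v0 + a01) * d2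
      + (a20*d1^2 + a11*d1*d2 + a02*d2^2)" for d1 d2
    by (simp add: f_def F_def F2_def algebra_simps power2_eq_square)
  have fQ: "f u v - \<sigma> = a20*(u-u0)^2 + a11*(u-u0)*(v-v0) + a02*(v-v0)^2" for u v
    using taylor[of "u - u0" "v - v0"] fx0 fy0 f0 by simp
  obtain a b c d where fac: "a20 = a*c" "a11 = a*d + b*c" "a02 = b*d" using binfac by blast
  have Qf: "f u v - \<sigma> = (a*(u-u0) + b*(v-v0)) * (c*(u-u0) + d*(v-v0))" for u v
    unfolding fQ fac by (simp add: algebra_simps power2_eq_square)
  have cp: "chart p = (\<lambda>(u, v). (u, v, 1))" and cpp: "chart_pt p = (u0, v0)"
    using zn by (simp_all add: chart_def chart_pt_def p u0_def v0_def)
  have Gc: "G (chart p w) = (f (fst w) (snd w) - \<sigma>) * (f (fst w) (snd w) + \<sigma>)" for w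
    by (cases w) (simp add: cp G_def f_def \<sigma>2[symmetric] algebra_simps power2_eq_square)
  show ?thesis
  proof (cases "a*d - b*c = 0")
    case False
    define W where "W = {w :: complex \<times> complex. f (fst w) (snd w) + \<sigma> \<noteq> 0}"
    have oW: "open W" unfolding W_def
      by (rule open_Collect_neq) (auto simp: f_def F_def F2_def intro!: continuous_intros)
    have inW: "(u0, v0) \<in> W" using f0 \<sigma>n by (simp add: W_def)
    have "germA (\<lambda>w. G (chart p w)) (u0, v0) 1"
    proof (rule lin_a1[OF False oW inW], intro allI impI)
      fix u v assume "(u, v) \<in> W"
      then have "f u v + \<sigma> \<noteq> 0" by (simp add: W_def)
      then show "G (chart p (u, v)) = 0 \<longleftrightarrow> (a*(u-u0) + b*(v-v0)) * (c*(u-u0) + d*(v-v0)) = 0"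
        unfolding Gc Qf[symmetric] by simp
    qed
    then show ?thesis by (simp add: germ_eq cpp G_def F_def)
  next
    case True
    have abn: "a \<noteq> 0 \<or> b \<noteq> 0" using notLinf fac by auto
    define P where "P = (\<lambda>t::complex. (u0 + t*b, v0 - t*a, 1::complex))"
    have singP: "sing_pt G (P t)" for t
    proof -
      have fP: "f (u0 + t*b) (v0 - t*a) = \<sigma>"
        using Qf[of "u0 + t*b" "v0 - t*a"] by (simp add: algebra_simps)
      have X: "2*a20*(u0 + t*b) + a11*(v0 - t*a) + a10 = 0"
      proof -
        have "2*a20*(u0 + t*b) + a11*(v0 - t*a) + a10 = (2*a20*u0 + a11* v0 + a10) + t * a * (b*c - a*d)"
          unfolding fac by (simp add: algebra_simps)
        then show ?thesis using fx0 True by simp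
      qed
      have Y: "a11*(u0 + t*b) + 2*a02*(v0 - t*a) + a01 = 0"
      proof -
        have "a11*(u0 + t*b) + 2*a02*(v0 - t*a) + a01 = (a11*u0 + 2*a02* v0 + a01) + t * b * (b*c - a*d)"
          unfolding fac by (simp add: algebra_simps)
        then show ?thesis using fy0 True by simp
      qed
      have E: "(u0 + t*b)*(2*a20*(u0 + t*b) + a11*(v0 - t*a) + a10*1) + (v0 - t*a)*(a11*(u0 + t*b) + 2*a02*(v0 - t*a) + a01*1)
          + 1*(a10*(u0 + t*b) + a01*(v0 - t*a) + 2*a00*1) = 2 * F (u0 + t*b, v0 - t*a, 1)"
        unfolding F_def by (rule euler)
      have Z: "a10*(u0 + t*b) + a01*(v0 - t*a) + 2*a00*1 = 2*\<sigma>"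
        using E X Y fP by (simp add: f_def)
      have Z2: "2 * (a10 * (u0 + t * b)) + 2 * (a01 * (v0 - t * a)) + 4 * a00 = 4 * \<sigma>"
        using arg_cong[OF Z, of "\<lambda>x. 2*x"] by (simp add: algebra_simps)
      have "F (u0 + t*b, v0 - t*a, 1) = \<sigma>" using fP by (simp add: f_def)
      then show ?thesis unfolding P_def G_def F_def
        using sing_G_iff[of a20 a11 a02 a10 a01 a00 c' "u0 + t*b" "v0 - t*a" 1] X Y Z Z2
        by (simp add: on_curve_def F_def \<sigma>2[symmetric] power2_eq_square zero_prod_def)
    qed
    have inj: "inj (\<lambda>t. proj_class (P t))"
    proof (rule injI)
      fix t1 t2 assume e: "proj_class (P t1) = proj_class (P t2)"
      have "P t1 \<in> proj_class (P t1)" unfolding proj_class_def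
        by (rule CollectI, rule exI[of _ 1]) (cases "P t1", simp add: scal_def)
      then have "P t1 \<in> proj_class (P t2)" using e by simp
      then obtain k where k: "k \<noteq> 0" "P t1 = scal k (P t2)" by (auto simp: proj_class_def)
      then have "k = 1" by (simp add: P_def scal_def)
      then have "t1 * b = t2 * b" "t1 * a = t2 * a" using k by (simp_all add: P_def scal_def)
      then show "t1 = t2" using abn by auto
    qed
    have "range (\<lambda>t. proj_class (P t)) \<subseteq> proj_class ` {q. sing_pt G q}" using singP by auto
    moreover have "finite (proj_class ` {q. sing_pt G q})" using fs by (simp add: finite_sing_def G_def F_def)
    ultimately have "finite (range (\<lambda>t. proj_class (P t)))" by (rule finite_subset)
    then have "finite (UNIV :: complex set)" using inj by (rule finite_imageD)
    then show ?thesis using infinite_UNIV_char_0 by blast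
  qed
qed


theorem lemma6:
  fixes a20 a11 a02 a10 a01 a00 c' :: complex
  defines "F \<equiv> F2 a20 a11 a02 a10 a01 a00"
  defines "G \<equiv> (\<lambda>w. (F w)^2 - c' * (snd (snd w))^4)"
  assumes notLinf: "\<not> (a20 = 0 \<and> a11 = 0 \<and> a02 = 0)"
    and c'_nz: "c' \<noteq> 0"
  shows "(\<forall>p. on_Linf p \<and> smooth_pt F p \<longrightarrow>
              germ_type_a G p (4 * I_Linf a20 a11 a02 p - 1))
       \<and> (\<forall>p. on_Linf p \<and> sing_pt F p \<longrightarrow> four_lines G)
       \<and> (finite_sing G \<longrightarrow> (\<forall>p. sing_pt G p \<and> \<not> on_curve F p \<longrightarrow> germ_type_a G p 1))"
  unfolding F_def G_def
  using part1[OF notLinf c'_nz] part2[OF notLinf c'_nz] part3[OF notLinf c'_nz] by blast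

end
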